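(* Let $X:\mathbb{R}^d\to\mathbb{R}_+$ and $M:\mathbb{R}^d\to\mathbb{R}^d$ be random mappings such that $X(ct)=X(t)$ and $M(ct)=cM(t)$ for all $t\in\mathbb{R}^d\setminus\{0\}$ and all scalars $c>0$, and suppose there is $a>0$ with $$\sup_{t\in\mathbb{R}^d\setminus\{0\}}\mathbb{E}[X(t)]<1\quad\text{and}\quad\sup_{t\in\mathbb{S}^{d-1}}\mathbb{E}[|M(t)|^{-a}X(t)]<1.$$ Let $\varphi:\mathbb{R}^d\to\mathbb{R}_+$ be bounded and suppose there is $c_0>0$ with $\varphi(t)\le\mathbb{E}[\varphi(M(t))X(t)]$ for all $t\in\mathbb{R}^d$ with $|t|>c_0$. Then $\varphi(t)=O(|t|^{-a})$ as $|t|\to\infty$.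
   Context: $|x|=\sum_i|x_i|$ is the $L^1$ norm on $\mathbb{R}^d$ and $\mathbb{S}^{d-1}=\{x\in\mathbb{R}^d:|x|=1\}$. *)

theory Defs
  imports "HOL-Probability.Probability"
begin

definition l1norm :: "real ^ 'n \<Rightarrow> real" where
  "l1norm x = (\<Sum>i\<in>UNIV. \<bar>x $ i\<bar>)"

definition l1sphere :: "(real ^ 'n) set" where
  "l1sphere = {x. l1norm x = 1}"

text \<open>|x|^(-a) as an extended nonnegative real, with the convention |0|^(-a) = infinity.\<close>
definition l1negpow :: "real \<Rightarrow> real ^ 'n \<Rightarrow> ennreal" where
  "l1negpow a x = (if l1norm x = 0 then \<infinity> else ennreal (l1norm x powr (- a)))"

end

theory Submission
  imports Defs
begin
lemma l1norm_meas[measurable]: "l1norm \<in> borel_measurable borel"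
  unfolding l1norm_def by measurable
lemma l1negpow_meas[measurable]: "l1negpow a \<in> borel_measurable borel"
  unfolding l1negpow_def[abs_def] by measurable
lemma l1norm_scale: "l1norm (c *\<^sub>R x) = \<bar>c\<bar> * l1norm x"
  unfolding l1norm_def by (simp add: abs_mult sum_distrib_left)
lemma l1norm_nonneg: "l1norm x \<ge> 0" unfolding l1norm_def by (simp add: sum_nonneg)
lemma l1norm_eq_0: "l1norm x = 0 \<longleftrightarrow> x = 0"
  unfolding l1norm_def by (simp add: sum_nonneg_eq_0_iff vec_eq_iff)
lemma l1negpow_scale: "c > 0 \<Longrightarrow> l1negpow a (c *\<^sub>R x) = ennreal (c powr (-a)) * l1negpow a x"
  unfolding l1negpow_def l1norm_scale using l1norm_nonneg[of x]
  by (auto simp: powr_mult ennreal_mult)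

theorem lemma4p6:
  fixes P :: "'w measure"
    and X :: "'w \<Rightarrow> real ^ 'n \<Rightarrow> real"
    and M :: "'w \<Rightarrow> real ^ 'n \<Rightarrow> real ^ 'n"
    and \<phi> :: "real ^ 'n \<Rightarrow> real"
    and a c0 :: real
  assumes "prob_space P"
    and X_meas: "\<And>t. (\<lambda>\<omega>. X \<omega> t) \<in> borel_measurable P"
    and M_meas: "\<And>t. (\<lambda>\<omega>. M \<omega> t) \<in> borel_measurable P"
    and X_nonneg: "\<And>\<omega> t. X \<omega> t \<ge> 0"
    and X_hom: "\<And>\<omega> t c. t \<noteq> 0 \<Longrightarrow> c > 0 \<Longrightarrow> X \<omega> (c *\<^sub>R t) = X \<omega> t"
    and M_hom: "\<And>\<omega> t c. t \<noteq> 0 \<Longrightarrow> c > 0 \<Longrightarrow> M \<omega> (c *\<^sub>R t) = c *\<^sub>R M \<omega> t"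
    and a_pos: "a > 0"
    and supX: "(SUP t\<in>UNIV - {0}. \<integral>\<^sup>+ \<omega>. ennreal (X \<omega> t) \<partial>P) < 1"
    and supMX: "(SUP t\<in>l1sphere. \<integral>\<^sup>+ \<omega>. l1negpow a (M \<omega> t) * ennreal (X \<omega> t) \<partial>P) < 1"
    and phi_meas: "\<phi> \<in> borel_measurable borel"
    and phi_nonneg: "\<And>t. \<phi> t \<ge> 0"
    and phi_bdd: "\<exists>B. \<forall>t. \<phi> t \<le> B"
    and c0_pos: "c0 > 0"
    and phi_ineq: "\<And>t. l1norm t > c0 \<Longrightarrow>
        ennreal (\<phi> t) \<le> (\<integral>\<^sup>+ \<omega>. ennreal (\<phi> (M \<omega> t) * X \<omega> t) \<partial>P)"
  shows "\<exists>C R. \<forall>t. l1norm t > R \<longrightarrow> \<phi> t \<le> C * l1norm t powr (- a)"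
proof -
  note [measurable] = X_meas M_meas
  obtain B0 where B0: "\<And>t. \<phi> t \<le> B0" using phi_bdd by blast
  define B where "B = max B0 1"
  have B: "\<And>t. \<phi> t \<le> B" "B \<ge> 1" unfolding B_def using B0 by (auto intro: le_max_iff_disj[THEN iffD2])
  define K where "K = B * c0 powr a"
  have Kpos: "K > 0" unfolding K_def using B c0_pos by auto
  define psi where "psi v = (if l1norm v = 0 then B else min B (K * l1norm v powr (-a)))" for v :: "real^'n"
  have psi_nonneg: "psi v \<ge> 0" for v unfolding psi_def using B Kpos by auto
  have psi_meas[measurable]: "psi \<in> borel_measurable borel"
    unfolding psi_def[abs_def] by measurable
  define r where "r = (SUP t\<in>UNIV - {0}. \<integral>\<^sup>+ \<omega>. ennreal (X \<omega> t) \<partial>P)"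
  define k where "k = (SUP t\<in>l1sphere. \<integral>\<^sup>+ \<omega>. l1negpow a (M \<omega> t) * ennreal (X \<omega> t) \<partial>P)"
  define \<theta> where "\<theta> = max (enn2real r) (enn2real k)"
  have th_nonneg: "\<theta> \<ge> 0" unfolding \<theta>_def by (simp add: le_max_iff_disj)
  have r1: "enn2real r < 1" using supX unfolding r_def[symmetric] by (cases r) auto
  have k1: "enn2real k < 1" using supMX unfolding k_def[symmetric] by (cases k) auto
  have th_lt: "\<theta> < 1" unfolding \<theta>_def using r1 k1 by auto
  have r_le: "r \<le> ennreal \<theta>" unfolding \<theta>_def using supX unfolding r_def[symmetric]
    by (cases r) auto
  have k_le: "k \<le> ennreal \<theta>" unfolding \<theta>_def using supMX unfolding k_def[symmetric]
    by (cases k) auto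
  have intX: "(\<integral>\<^sup>+ \<omega>. ennreal (X \<omega> t) \<partial>P) \<le> ennreal \<theta>" if "t \<noteq> 0" for t
  proof -
    have "(\<integral>\<^sup>+ \<omega>. ennreal (X \<omega> t) \<partial>P) \<le> r" unfolding r_def using that by (intro SUP_upper) auto
    then show ?thesis using r_le by auto
  qed
  have intMX: "(\<integral>\<^sup>+ \<omega>. l1negpow a (M \<omega> t) * ennreal (X \<omega> t) \<partial>P) \<le> ennreal (l1norm t powr (-a) * \<theta>)"
    if "t \<noteq> 0" for t
  proof -
    define l where "l = l1norm t"
    have lpos: "l > 0" using that l1norm_nonneg[of t] l1norm_eq_0[of t] unfolding l_def by linarith
    define u where "u = (1 / l) *\<^sub>R t"
    have tu: "t = l *\<^sub>R u" unfolding u_def using lpos by auto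
    have u0: "u \<noteq> 0" using that tu by auto
    have us: "u \<in> l1sphere" unfolding l1sphere_def u_def using lpos l_def by (simp add: l1norm_scale)
    have "(\<integral>\<^sup>+ \<omega>. l1negpow a (M \<omega> t) * ennreal (X \<omega> t) \<partial>P)
        = (\<integral>\<^sup>+ \<omega>. ennreal (l powr (-a)) * (l1negpow a (M \<omega> u) * ennreal (X \<omega> u)) \<partial>P)"
      unfolding tu using lpos u0 by (simp add: M_hom X_hom l1negpow_scale mult.assoc)
    also have "\<dots> = ennreal (l powr (-a)) * (\<integral>\<^sup>+ \<omega>. l1negpow a (M \<omega> u) * ennreal (X \<omega> u) \<partial>P)"
      using M_meas X_meas by (intro nn_integral_cmult) measurable
    also have "\<dots> \<le> ennreal (l powr (-a)) * k"
      unfolding k_def using us by (intro mult_left_mono SUP_upper) auto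
    also have "\<dots> \<le> ennreal (l powr (-a)) * ennreal \<theta>" using k_le by (intro mult_left_mono) auto
    finally show ?thesis unfolding l_def using th_nonneg by (simp add: ennreal_mult)
  qed
  have step: "\<phi> t \<le> \<theta> * psi t + \<theta> * e"
    if e: "e \<ge> 0" and H: "\<And>v. \<phi> v \<le> psi v + e" and t: "l1norm t > c0" for t e
  proof -
    have t0: "t \<noteq> 0" using t c0_pos unfolding l1norm_def by auto
    have I1a: "(\<integral>\<^sup>+ \<omega>. ennreal (psi (M \<omega> t)) * ennreal (X \<omega> t) \<partial>P) \<le> ennreal (B * \<theta>)"
    proof -
      have "(\<integral>\<^sup>+ \<omega>. ennreal (psi (M \<omega> t)) * ennreal (X \<omega> t) \<partial>P) \<le> (\<integral>\<^sup>+ \<omega>. ennreal B * ennreal (X \<omega> t) \<partial>P)"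
        by (intro nn_integral_mono mult_right_mono) (auto simp: psi_def intro!: ennreal_leI)
      also have "\<dots> = ennreal B * (\<integral>\<^sup>+ \<omega>. ennreal (X \<omega> t) \<partial>P)"
        using X_meas by (intro nn_integral_cmult) measurable
      also have "\<dots> \<le> ennreal B * ennreal \<theta>" using intX[OF t0] by (intro mult_left_mono) auto
      finally show ?thesis using B th_nonneg by (simp add: ennreal_mult)
    qed
    have I1b: "(\<integral>\<^sup>+ \<omega>. ennreal (psi (M \<omega> t)) * ennreal (X \<omega> t) \<partial>P) \<le> ennreal (K * (l1norm t powr (-a) * \<theta>))"
    proof -
      have pw: "ennreal (psi v) \<le> ennreal K * l1negpow a v" for v
              proof (cases "l1norm v = 0")
        case True
        then have "ennreal K * l1negpow a v = top" using Kpos by (simp add: l1negpow_def ennreal_mult_eq_top_iff)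
        then show ?thesis by simp
      next
        case False
        have "psi v \<le> K * l1norm v powr (-a)" using False by (simp add: psi_def)
        then have "ennreal (psi v) \<le> ennreal (K * l1norm v powr (-a))" by (rule ennreal_leI)
        then show ?thesis using False Kpos by (simp add: l1negpow_def ennreal_mult)
      qed
      have "(\<integral>\<^sup>+ \<omega>. ennreal (psi (M \<omega> t)) * ennreal (X \<omega> t) \<partial>P) \<le> (\<integral>\<^sup>+ \<omega>. ennreal K * (l1negpow a (M \<omega> t) * ennreal (X \<omega> t)) \<partial>P)"
      proof (intro nn_integral_mono)
        fix \<omega>
        show "ennreal (psi (M \<omega> t)) * ennreal (X \<omega> t) \<le> ennreal K * (l1negpow a (M \<omega> t) * ennreal (X \<omega> t))"
          using mult_right_mono[OF pw[of "M \<omega> t"], of "ennreal (X \<omega> t)"] by (simp add: mult.assoc)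
      qed
      also have "\<dots> = ennreal K * (\<integral>\<^sup>+ \<omega>. l1negpow a (M \<omega> t) * ennreal (X \<omega> t) \<partial>P)"
        using X_meas M_meas by (intro nn_integral_cmult) measurable
      also have "\<dots> \<le> ennreal K * ennreal (l1norm t powr (-a) * \<theta>)" using intMX[OF t0] by (intro mult_left_mono) auto
      finally show ?thesis using Kpos th_nonneg by (simp add: ennreal_mult)
    qed
    have I1: "(\<integral>\<^sup>+ \<omega>. ennreal (psi (M \<omega> t)) * ennreal (X \<omega> t) \<partial>P) \<le> ennreal (\<theta> * psi t)"
    proof (cases "B \<le> K * (l1norm t powr (-a))")
      case True
      then have "psi t = B" using t c0_pos by (simp add: psi_def)
      then show ?thesis using I1a by (simp add: mult.commute)
    next
      case False
      then have "psi t = K * (l1norm t powr (-a))" using t c0_pos by (simp add: psi_def)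
      then show ?thesis using I1b by (simp add: mult.commute mult.left_commute)
    qed
    have "ennreal (\<phi> t) \<le> (\<integral>\<^sup>+ \<omega>. ennreal (\<phi> (M \<omega> t) * X \<omega> t) \<partial>P)" using phi_ineq[OF t] .
    also have "\<dots> \<le> (\<integral>\<^sup>+ \<omega>. ennreal (psi (M \<omega> t)) * ennreal (X \<omega> t) + ennreal e * ennreal (X \<omega> t) \<partial>P)"
    proof (intro nn_integral_mono)
      fix \<omega>
      have "\<phi> (M \<omega> t) * X \<omega> t \<le> (psi (M \<omega> t) + e) * X \<omega> t"
        using H[of "M \<omega> t"] X_nonneg[of \<omega> t] by (rule mult_right_mono)
      then show "ennreal (\<phi> (M \<omega> t) * X \<omega> t) \<le> ennreal (psi (M \<omega> t)) * ennreal (X \<omega> t) + ennreal e * ennreal (X \<omega> t)"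
      proof -
        have p0: "psi (M \<omega> t) * X \<omega> t \<ge> 0" "e * X \<omega> t \<ge> 0"
          using psi_nonneg X_nonneg e by auto
        have "ennreal (\<phi> (M \<omega> t) * X \<omega> t) \<le> ennreal (psi (M \<omega> t) * X \<omega> t + e * X \<omega> t)"
          using \<open>\<phi> (M \<omega> t) * X \<omega> t \<le> (psi (M \<omega> t) + e) * X \<omega> t\<close>
          by (intro ennreal_leI) (simp add: distrib_right)
        also have "\<dots> = ennreal (psi (M \<omega> t) * X \<omega> t) + ennreal (e * X \<omega> t)"
          using p0 by (rule ennreal_plus)
        also have "\<dots> = ennreal (psi (M \<omega> t)) * ennreal (X \<omega> t) + ennreal e * ennreal (X \<omega> t)"
          using psi_nonneg X_nonneg e by (simp add: ennreal_mult)
        finally show ?thesis .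
      qed
    qed
    also have "\<dots> = (\<integral>\<^sup>+ \<omega>. ennreal (psi (M \<omega> t)) * ennreal (X \<omega> t) \<partial>P) + ennreal e * (\<integral>\<^sup>+ \<omega>. ennreal (X \<omega> t) \<partial>P)"
    proof -
      have "(\<integral>\<^sup>+ \<omega>. ennreal (psi (M \<omega> t)) * ennreal (X \<omega> t) + ennreal e * ennreal (X \<omega> t) \<partial>P)
          = (\<integral>\<^sup>+ \<omega>. ennreal (psi (M \<omega> t)) * ennreal (X \<omega> t) \<partial>P) + (\<integral>\<^sup>+ \<omega>. ennreal e * ennreal (X \<omega> t) \<partial>P)"
        by (rule nn_integral_add) measurable
      also have "(\<integral>\<^sup>+ \<omega>. ennreal e * ennreal (X \<omega> t) \<partial>P) = ennreal e * (\<integral>\<^sup>+ \<omega>. ennreal (X \<omega> t) \<partial>P)"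
        by (rule nn_integral_cmult) measurable
      finally show ?thesis .
    qed
    also have "\<dots> \<le> ennreal (\<theta> * psi t) + ennreal e * ennreal \<theta>"
      using I1 intX[OF t0] by (intro add_mono mult_left_mono) auto
    also have "\<dots> = ennreal (\<theta> * psi t + \<theta> * e)"
      using th_nonneg psi_nonneg e by (simp add: ennreal_mult[symmetric] ennreal_plus mult.commute)
    finally show ?thesis using th_nonneg psi_nonneg e
      by (subst (asm) ennreal_le_iff) auto
  qed
  have small: "\<phi> t \<le> psi t" if "l1norm t \<le> c0" for t
  proof (cases "l1norm t = 0")
    case True then show ?thesis using B by (simp add: psi_def)
  next
    case False
    then have lp: "l1norm t > 0" using l1norm_nonneg[of t] by auto
    have "l1norm t powr a \<le> c0 powr a" using lp that a_pos by (intro powr_mono2) auto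
    then have "B \<le> K * l1norm t powr (-a)" unfolding K_def using lp B
      by (simp add: powr_minus field_simps)
    then show ?thesis using False B by (simp add: psi_def)
  qed
  have ind: "\<forall>v. \<phi> v \<le> psi v + \<theta>^n * B" for n
  proof (induction n)
    case 0 then show ?case using B psi_nonneg by (simp add: add_increasing)
  next
    case (Suc n)
    show ?case
    proof
      fix v
      show "\<phi> v \<le> psi v + \<theta> ^ Suc n * B"
      proof (cases "l1norm v > c0")
        case True
        have "\<phi> v \<le> \<theta> * psi v + \<theta> * (\<theta>^n * B)"
        proof (rule step[of "\<theta>^n * B"])
          show "0 \<le> \<theta>^n * B" using th_nonneg B(2) by simp
          show "\<And>w. \<phi> w \<le> psi w + \<theta>^n * B" using Suc.IH by blast
          show "c0 < l1norm v" using True .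
        qed
        also have "\<dots> \<le> psi v + \<theta> ^ Suc n * B"
          using th_lt psi_nonneg[of v] th_nonneg by (simp add: mult_left_le_one_le)
        finally show ?thesis .
      next
        case False
        then show ?thesis using small[of v] th_nonneg B by (simp add: add_increasing2)
      qed
    qed
  qed
  have final: "\<phi> t \<le> psi t" for t
  proof -
    have "(\<lambda>n. psi t + \<theta>^n * B) \<longlonglongrightarrow> psi t + 0 * B"
      using th_nonneg th_lt by (intro tendsto_intros LIMSEQ_power_zero) auto
    then have "\<phi> t \<le> psi t + 0 * B"
      by (rule LIMSEQ_le_const) (use ind in blast)
    then show ?thesis by simp
  qed
  show ?thesis
  proof (intro exI allI impI)
    fix t :: "real^'n" assume t: "l1norm t > c0"
    then have "l1norm t \<noteq> 0" using c0_pos by auto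
    then show "\<phi> t \<le> K * l1norm t powr (-a)" using final[of t] by (simp add: psi_def)
  qed
qed
end
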